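(* Let $n\geq2$, $p=n$, $q=1$ and $k>0$ with $k^2>1/(n-1)$. Then the critical velocity is $\overline{c}=\frac{k^2-1}{k}$, and the trajectory $l_{\overline{c}}$ is the curve $Y=k(X-X^n)$, $X\in[0,1]$, corresponding to the traveling wave profiles $f(\xi)=(1+Ce^{-k(n-1)\xi})^{-1/(n-1)}$, $C>0$.
   Context: Consider $u_t=u_{xx}+k(u^n)_x+u^p-u^q$; traveling waves $u=f(x+ct)$ satisfy $f''=cf'-knf^{n-1}f'-f^p+f^q$, equivalently the system $X'=Y$, $Y'=cY-knX^{n-1}Y-X^p+X^q$ ($X=f$, $Y=f'$) with critical points $P_1=(0,0)$, $P_2=(1,0)$. For each $c$, $l_c$ is the unique trajectory leaving $P_1$ (as $\xi\to-\infty$) into $\{X>0,Y>0\}$; it connects directly $P_1$ to $P_2$ if it tends to $P_2$ as $\xi\to\infty$ with $X>0,Y>0$ throughout. The critical velocity is $\overline{c}=\sup\{c: l_c\text{ connects directly }P_1\text{ and }P_2\}$. *)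

theory Defs
  imports "HOL-Analysis.Analysis"
begin

definition tw_solution ::
  "nat \<Rightarrow> nat \<Rightarrow> nat \<Rightarrow> real \<Rightarrow> real \<Rightarrow> (real \<Rightarrow> real) \<Rightarrow> (real \<Rightarrow> real) \<Rightarrow> bool" where
  "tw_solution n p q k c X Y \<longleftrightarrow>
     (\<forall>t. (X has_real_derivative Y t) (at t) \<and>
          (Y has_real_derivative
              (c * Y t - k * real n * X t ^ (n - 1) * Y t - X t ^ p + X t ^ q)) (at t))"

definition direct_connection ::
  "nat \<Rightarrow> nat \<Rightarrow> nat \<Rightarrow> real \<Rightarrow> real \<Rightarrow> (real \<Rightarrow> real) \<Rightarrow> (real \<Rightarrow> real) \<Rightarrow> bool" where
  "direct_connection n p q k c X Y \<longleftrightarrow>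
     tw_solution n p q k c X Y \<and>
     (\<forall>t. X t > 0 \<and> Y t > 0) \<and>
     ((\<lambda>t. (X t, Y t)) \<longlongrightarrow> (0, 0)) at_bot \<and>
     ((\<lambda>t. (X t, Y t)) \<longlongrightarrow> (1, 0)) at_top"

text \<open>l_c connects P1 and P2 directly.  Since l_c is the unique trajectory leaving P1 into
  the open first quadrant, this holds iff some solution is a direct connection.\<close>
definition connects_directly :: "nat \<Rightarrow> nat \<Rightarrow> nat \<Rightarrow> real \<Rightarrow> real \<Rightarrow> bool" where
  "connects_directly n p q k c \<longleftrightarrow> (\<exists>X Y. direct_connection n p q k c X Y)"

definition critical_velocity :: "nat \<Rightarrow> nat \<Rightarrow> nat \<Rightarrow> real \<Rightarrow> real" where
  "critical_velocity n p q k = Sup {c. connects_directly n p q k c}"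

end

theory Submission
  imports Defs "HOL-Real_Asymp.Real_Asymp"
begin

lemma D_deriv:
  assumes tw: "tw_solution n n 1 k c X Y" and k: "k > 0"
  shows "((\<lambda>t. Y t - k * (X t - X t ^ n)) has_real_derivative
           ((c - (k^2-1)/k) * Y t - (Y t - k * (X t - X t ^ n)) / k)) (at t)"
proof -
  have dX: "(X has_real_derivative Y t) (at t)"
   and dY: "(Y has_real_derivative (c * Y t - k * real n * X t ^ (n - 1) * Y t - X t ^ n + X t ^ 1)) (at t)"
    using tw unfolding tw_solution_def by auto
  have "((\<lambda>t. Y t - k * (X t - X t ^ n)) has_real_derivative
      ((c * Y t - k * real n * X t ^ (n - 1) * Y t - X t ^ n + X t ^ 1) - k * (Y t - real n * X t ^ (n - 1) * Y t))) (at t)"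
    by (rule derivative_eq_intros dX dY refl | simp)+
  moreover have "(c * Y t - k * real n * X t ^ (n - 1) * Y t - X t ^ n + X t ^ 1) - k * (Y t - real n * X t ^ (n - 1) * Y t)
     = (c - (k^2-1)/k) * Y t - (Y t - k * (X t - X t ^ n)) / k"
    using k by (simp add: field_simps power2_eq_square)
  ultimately show ?thesis by simp
qed

lemma dc_facts:
  assumes "direct_connection n p q k c X Y"
  shows "tw_solution n p q k c X Y" "\<And>t. X t > 0" "\<And>t. Y t > 0"
    "(X \<longlongrightarrow> 0) at_bot" "(Y \<longlongrightarrow> 0) at_bot" "(X \<longlongrightarrow> 1) at_top" "(Y \<longlongrightarrow> 0) at_top"
proof -
  have l0: "((\<lambda>t. (X t, Y t)) \<longlongrightarrow> (0, 0)) at_bot" and l1: "((\<lambda>t. (X t, Y t)) \<longlongrightarrow> (1, 0)) at_top"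
    using assms unfolding direct_connection_def by auto
  show "tw_solution n p q k c X Y" "\<And>t. X t > 0" "\<And>t. Y t > 0"
    using assms unfolding direct_connection_def by auto
  show "(X \<longlongrightarrow> 0) at_bot" using tendsto_fst[OF l0] by simp
  show "(Y \<longlongrightarrow> 0) at_bot" using tendsto_snd[OF l0] by simp
  show "(X \<longlongrightarrow> 1) at_top" using tendsto_fst[OF l1] by simp
  show "(Y \<longlongrightarrow> 0) at_top" using tendsto_snd[OF l1] by simp
qed

lemma X_lt1:
  assumes "direct_connection n p q k c X Y"
  shows "X t < 1"
proof -
  note f = dc_facts[OF assms]
  have "-1 < (\<lambda>s. - X s) t"
  proof (rule DERIV_neg_imp_decreasing_at_top[of t])
    show "\<exists>y. ((\<lambda>s. - X s) has_real_derivative y) (at x) \<and> y < 0" for x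
    proof -
      have dX: "(X has_real_derivative Y x) (at x)" using f(1) unfolding tw_solution_def by auto
      have "((\<lambda>s. - X s) has_real_derivative - Y x) (at x)"
        by (rule derivative_eq_intros dX | simp)+
      then show ?thesis using f(3)[of x] by auto
    qed
    show "((\<lambda>s. - X s) \<longlongrightarrow> - 1) at_top"
      using tendsto_minus[OF f(6)] by simp
  qed
  then show ?thesis by simp
qed

lemma geom_aux: "(1 - x) * (\<Sum>i<m. x ^ (i+1)) = x - (x::real) ^ (m+1)"
proof (induction m)
  case (Suc m)
  have "(1 - x) * (\<Sum>i<Suc m. x ^ (i+1)) = (1 - x) * (\<Sum>i<m. x ^ (i+1)) + (1 - x) * x ^ (m+1)"
    by (simp add: distrib_left)
  also have "\<dots> = x - x ^ (Suc m + 1)" unfolding Suc.IH by (simp add: algebra_simps)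
  finally show ?case .
qed simp

lemma E_limbot:
  fixes k :: real and D :: "real \<Rightarrow> real"
  assumes "k > 0" "(D \<longlongrightarrow> 0) at_bot"
  shows "((\<lambda>t. exp (t/k) * D t) \<longlongrightarrow> 0) at_bot"
proof -
  have "((\<lambda>t::real. exp (t/k)) \<longlongrightarrow> 0) at_bot" using assms(1) by real_asymp
  from tendsto_mult[OF this assms(2)] show ?thesis by simp
qed

lemma no_conn:
  assumes n: "n \<ge> 2" and k: "k > 0" and kk: "k ^ 2 > 1 / (real n - 1)"
    and c: "c > (k^2-1)/k" and dc: "direct_connection n n 1 k c X Y"
  shows False
proof -
  note f = dc_facts[OF dc]
  define cb where "cb = (k^2-1)/k"
  define D where "D t = Y t - k * (X t - X t ^ n)" for t
  define E where "E t = exp (t/k) * D t" for t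
  have dD: "(D has_real_derivative ((c - cb) * Y t - D t / k)) (at t)" for t
    using D_deriv[OF f(1) k] unfolding D_def cb_def by simp
  have dE: "(E has_real_derivative exp (t/k) * ((c - cb) * Y t)) (at t)" for t
  proof -
    have "(E has_real_derivative exp (t/k) * (1/k) * D t + exp (t/k) * ((c - cb) * Y t - D t / k)) (at t)"
    proof -
      have e: "((\<lambda>t. exp (t/k)) has_real_derivative exp (t/k) * (1/k)) (at t)"
        using k by (auto intro!: derivative_eq_intros)
      show ?thesis unfolding E_def using DERIV_mult[OF e dD] by (simp add: algebra_simps)
    qed
    moreover have "exp (t/k) * (1/k) * D t + exp (t/k) * ((c - cb) * Y t - D t / k) = exp (t/k) * ((c - cb) * Y t)"
      by (simp add: algebra_simps)
    ultimately show ?thesis by simp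
  qed
  have Dlim: "(D \<longlongrightarrow> 0) at_bot"
  proof -
    have "((\<lambda>t. Y t - k * (X t - X t ^ n)) \<longlongrightarrow> 0 - k * (0 - 0 ^ n)) at_bot"
      by (intro tendsto_intros f)
    moreover have "(0::real) ^ n = 0" using n by simp
    ultimately show ?thesis unfolding D_def by simp
  qed
  have Epos: "E t > 0" for t
  proof -
    have "0 < E t"
    proof (rule DERIV_pos_imp_increasing_at_bot[of t E 0])
      show "\<exists>y. (E has_real_derivative y) (at x) \<and> 0 < y" for x
        using dE[of x] f(3)[of x] c unfolding cb_def by (intro exI[of _ "exp (x/k) * ((c - cb) * Y x)"]) (simp add: cb_def)
      show "(E \<longlongrightarrow> 0) at_bot" unfolding E_def by (rule E_limbot[OF k Dlim])
    qed
    then show ?thesis .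
  qed
  define D0 where "D0 = D 0"
  have D0pos: "D0 > 0" using Epos[of 0] unfolding E_def D0_def by simp
  have Dlow: "D t \<ge> D0 * exp (- t / k)" if "t \<ge> 0" for t
  proof -
    have "E 0 \<le> E t"
      by (rule DERIV_nonneg_imp_nondecreasing[OF that]) (use dE f(3) c in \<open>auto intro!: exI simp: cb_def less_imp_le\<close>)
    then have "D0 \<le> exp (t/k) * D t" unfolding E_def D0_def by simp
    then have "D0 * exp (- t / k) \<le> exp (t/k) * D t * exp (- t / k)"
      by (simp add: mult_right_mono)
    also have "\<dots> = D t" by (simp add: mult.commute mult.left_commute flip: exp_add)
    finally show ?thesis .
  qed
  have Xlt: "X t < 1" for t by (rule X_lt1[OF dc])
  have gpos: "X t - X t ^ n > 0" for t
  proof -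
    have "X t ^ n < X t ^ 1"
      by (rule power_strict_decreasing) (use n f(2)[of t] Xlt[of t] in auto)
    then show ?thesis by simp
  qed
  have dX: "(X has_real_derivative Y t) (at t)" for t using f(1) unfolding tw_solution_def by auto
  define w where "w t = (1 - X t) - k * D0 * exp (- t / k)" for t
  have wpos: "w t > 0" if "t \<ge> 0" for t
  proof (rule DERIV_neg_imp_decreasing_at_top[of t w 0])
    fix x assume x: "x \<ge> t"
    have "(w has_real_derivative - Y x - k * D0 * (exp (- x / k) * (- 1 / k))) (at x)"
      unfolding w_def using k by (auto intro!: derivative_eq_intros dX)
    moreover have "- Y x - k * D0 * (exp (- x / k) * (- 1 / k)) = - Y x + D0 * exp (- x / k)"
      using k by (simp add: field_simps)
    moreover have "D0 * exp (- x / k) \<le> D x" using Dlow[of x] x that by simp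
    moreover have "D x < Y x" unfolding D_def using gpos[of x] k by simp
    ultimately show "\<exists>y. (w has_real_derivative y) (at x) \<and> y < 0" by (intro exI[of _ "- Y x + D0 * exp (- x / k)"]) auto
  next
    have "((\<lambda>t::real. exp (- t / k)) \<longlongrightarrow> 0) at_top" using k by real_asymp
    then have "((\<lambda>t. (1 - X t) - k * D0 * exp (- t / k)) \<longlongrightarrow> (1 - 1) - k * D0 * 0) at_top"
      by (intro tendsto_intros f)
    then show "(w \<longlongrightarrow> 0) at_top" unfolding w_def by simp
  qed
  define r where "r = (1/k + k * (real n - 1)) / 2"
  have kn: "1/k < k * (real n - 1)"
  proof -
    have "real n - 1 > 0" using n by simp
    then have "1 < k^2 * (real n - 1)" using kk by (simp add: field_simps)
    then show ?thesis using k by (simp add: field_simps power2_eq_square)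
  qed
  have r1: "1/k < r" and r2: "r < k * (real n - 1)" using kn unfolding r_def by auto
  define S where "S t = (\<Sum>i<n-1. X t ^ (i+1))" for t
  have Sg: "(1 - X t) * S t = X t - X t ^ n" for t
    unfolding S_def using geom_aux[of "X t" "n-1"] n by simp
  have "((\<lambda>t. k * S t) \<longlongrightarrow> k * (\<Sum>i<n-1. 1 ^ (i+1))) at_top"
    unfolding S_def by (intro tendsto_intros f)
  then have "((\<lambda>t. k * S t) \<longlongrightarrow> k * (real n - 1)) at_top" using n by simp
  from order_tendstoD(1)[OF this r2] obtain T where T: "\<And>t. t \<ge> T \<Longrightarrow> k * S t > r"
    unfolding eventually_at_top_linorder by auto
  define z where "z t = (1 - X t) * exp (r * t)" for t
  have zdec: "z t \<le> z T" if "t \<ge> T" for t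
  proof (rule DERIV_nonpos_imp_nonincreasing[OF that])
    fix x assume x: "T \<le> x" "x \<le> t"
    have "(z has_real_derivative (- Y x) * exp (r * x) + (1 - X x) * (exp (r * x) * r)) (at x)"
      unfolding z_def by (auto intro!: derivative_eq_intros dX)
    moreover have "(- Y x) * exp (r * x) + (1 - X x) * (exp (r * x) * r) = exp (r * x) * (r * (1 - X x) - Y x)"
      by (simp add: algebra_simps)
    moreover have "r * (1 - X x) < Y x"
    proof -
      have "r * (1 - X x) < k * S x * (1 - X x)" using T[of x] x Xlt[of x] by simp
      also have "\<dots> = k * ((1 - X x) * S x)" by simp
      also have "\<dots> = k * (X x - X x ^ n)" by (simp only: Sg)
      also have "\<dots> < Y x" using Epos[of x] unfolding E_def D_def by (simp add: zero_less_mult_iff)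
      finally show ?thesis .
    qed
    ultimately show "\<exists>y. (z has_real_derivative y) (at x) \<and> y \<le> 0"
      by (intro exI[of _ "exp (r * x) * (r * (1 - X x) - Y x)"]) (auto simp: mult_nonneg_nonpos)
  qed
  have ev: "eventually (\<lambda>t. k * D0 \<le> z T * exp ((1/k - r) * t)) at_top"
    unfolding eventually_at_top_linorder
  proof (intro exI[of _ "max 0 T"] allI impI)
    fix t assume t: "t \<ge> max 0 T"
    have "k * D0 * exp (- t / k) < 1 - X t" using wpos[of t] t unfolding w_def by simp
    also have "1 - X t = z t * exp (- (r * t))" unfolding z_def by (simp flip: exp_add)
    also have "\<dots> \<le> z T * exp (- (r * t))" using zdec[of t] t by simp
    finally have "k * D0 * exp (- t / k) * exp (t / k) \<le> z T * exp (- (r * t)) * exp (t / k)"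
      by simp
    then show "k * D0 \<le> z T * exp ((1/k - r) * t)"
      by (simp add: mult.assoc flip: exp_add) (simp add: algebra_simps)
  qed
  have "((\<lambda>t::real. z T * exp ((1/k - r) * t)) \<longlongrightarrow> z T * 0) at_top"
  proof (intro tendsto_intros)
    have "1/k - r < 0" using r1 by simp
    then show "((\<lambda>t::real. exp ((1/k - r) * t)) \<longlongrightarrow> 0) at_top" by real_asymp
  qed
  from tendsto_le[OF _ this tendsto_const ev] have "k * D0 \<le> 0" by simp
  then show False using k D0pos by (simp add: mult_le_0_iff)
qed

lemma sol_deriv:
  fixes k C :: real and n :: nat
  assumes n: "n \<ge> 2" and k: "k > 0" and C: "C > 0"
  defines "X \<equiv> \<lambda>t. (1 + C * exp (- k * (real n - 1) * t)) powr (- 1 / (real n - 1))"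
  shows "(X has_real_derivative k * (X t - X t ^ n)) (at t)" "0 < X t" "X t < 1"
proof -
  define m where "m = real n - 1"
  have m: "m > 0" "m \<ge> 1" using n unfolding m_def by auto
  define a where "a = - 1 / m"
  define B where "B t = 1 + C * exp (- k * m * t)" for t
  have XB: "X t = B t powr a" for t unfolding X_def B_def a_def m_def by simp
  have B1: "B t > 1" for t unfolding B_def using C by simp
  have dB: "(B has_real_derivative C * (exp (- k * m * t) * (- k * m))) (at t)"
    unfolding B_def by (auto intro!: derivative_eq_intros)
  have d: "((\<lambda>t. B t powr a) has_real_derivative a * (B t) powr (a - of_nat 1) * (C * (exp (- k * m * t) * (- k * m)))) (at t)"
    by (rule DERIV_fun_powr[OF dB]) (use B1[of t] in simp)
  have e1: "a * (C * (exp (- k * m * t) * (- k * m))) = k * (B t - 1)"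
    unfolding a_def B_def using m by (simp add: field_simps)
  have e2: "B t * B t powr (a - 1) = B t powr a"
    using B1[of t] by (simp add: powr_add[symmetric] powr_diff)
  have e3: "(B t powr a) ^ n = B t powr (a - 1)"
  proof -
    have "(B t powr a) ^ n = B t powr (real n * a)" using B1[of t] by (simp add: powr_power)
    moreover have "real n * a = a - 1" unfolding a_def m_def using m unfolding m_def by (simp add: field_simps)
    ultimately show ?thesis by simp
  qed
  have "a * (B t) powr (a - of_nat 1) * (C * (exp (- k * m * t) * (- k * m))) = (a * (C * (exp (- k * m * t) * (- k * m)))) * B t powr (a - 1)"
    by (simp add: mult_ac)
  also have "\<dots> = k * (B t - 1) * B t powr (a - 1)" unfolding e1 ..
  also have "\<dots> = k * (B t powr a - (B t powr a) ^ n)" using e2 e3 by (simp add: algebra_simps)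
  finally show "(X has_real_derivative k * (X t - X t ^ n)) (at t)"
    using d unfolding XB[abs_def] by simp
  show "0 < X t" unfolding XB using B1[of t] by simp
  have "a < 0" unfolding a_def using m by simp
  then show "X t < 1" unfolding XB using powr_less_one B1 by blast
qed

lemma sol_conn:
  fixes k C :: real and n :: nat
  assumes n: "n \<ge> 2" and k: "k > 0" and C: "C > 0"
    and X: "\<And>t. X t = (1 + C * exp (- k * (real n - 1) * t)) powr (- 1 / (real n - 1))"
    and Y: "\<And>t. Y t = k * (X t - X t ^ n)"
  shows "direct_connection n n 1 k ((k ^ 2 - 1) / k) X Y"
proof -
  have Xe: "X = (\<lambda>t. (1 + C * exp (- k * (real n - 1) * t)) powr (- 1 / (real n - 1)))"
    using X by auto
  note sd = sol_deriv[OF n k C]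
  have dX: "(X has_real_derivative Y t) (at t)" for t using sd(1)[of t, folded X Xe] Y[of t] by simp
  have Xpos: "0 < X t" and Xlt: "X t < 1" for t using sd(2,3)[of t, folded X] by auto
  have gpos: "X t - X t ^ n > 0" for t
  proof -
    have "X t ^ n < X t ^ 1"
      by (rule power_strict_decreasing) (use n Xpos[of t] Xlt[of t] in auto)
    then show ?thesis by simp
  qed
  have Ye: "Y = (\<lambda>t. k * (X t - X t ^ n))" using Y by auto
  have tw: "tw_solution n n 1 k ((k ^ 2 - 1) / k) X Y"
    unfolding tw_solution_def
  proof (intro allI conjI dX)
    fix t
    have "(Y has_real_derivative k * (Y t - real n * X t ^ (n - 1) * Y t)) (at t)"
      unfolding Ye by (auto intro!: derivative_eq_intros dX[unfolded Ye])
    moreover have "k * (Y t - real n * X t ^ (n - 1) * Y t) =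
       (k ^ 2 - 1) / k * Y t - k * real n * X t ^ (n - 1) * Y t - X t ^ n + X t ^ 1"
      using k Y[of t] by (simp add: field_simps power2_eq_square)
    ultimately show "(Y has_real_derivative (k ^ 2 - 1) / k * Y t - k * real n * X t ^ (n - 1) * Y t - X t ^ n + X t ^ 1) (at t)"
      by simp
  qed
  have m: "real n - 1 > 0" using n by simp
  have "((\<lambda>t. (1 + C * exp (- k * (real n - 1) * t)) powr (- 1 / (real n - 1))) \<longlongrightarrow> 0) at_bot"
  proof (rule tendsto_neg_powr)
    show "- 1 / (real n - 1) < 0" using m by simp
    show "LIM t at_bot. 1 + C * exp (- k * (real n - 1) * t) :> at_top"
      using k m C by real_asymp
  qed
  then have X0: "(X \<longlongrightarrow> 0) at_bot" unfolding Xe .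
  have "((\<lambda>t. (1 + C * exp (- k * (real n - 1) * t)) powr (- 1 / (real n - 1))) \<longlongrightarrow> (1 + C * 0) powr (- 1 / (real n - 1))) at_top"
  proof (rule tendsto_powr)
    show "((\<lambda>t. 1 + C * exp (- k * (real n - 1) * t)) \<longlongrightarrow> 1 + C * 0) at_top"
    proof (intro tendsto_intros)
      show "((\<lambda>t. exp (- k * (real n - 1) * t)) \<longlongrightarrow> 0) at_top" using k m by real_asymp
    qed
  qed auto
  then have X1: "(X \<longlongrightarrow> 1) at_top" unfolding Xe by simp
  have n0: "(0::real) ^ n = 0" using n by simp
  have Y0: "(Y \<longlongrightarrow> 0) at_bot"
  proof -
    have "((\<lambda>t. k * (X t - X t ^ n)) \<longlongrightarrow> k * (0 - 0 ^ n)) at_bot" by (intro tendsto_intros X0)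
    then show ?thesis unfolding Ye n0 by simp
  qed
  have Y1: "(Y \<longlongrightarrow> 0) at_top"
  proof -
    have "((\<lambda>t. k * (X t - X t ^ n)) \<longlongrightarrow> k * (1 - 1 ^ n)) at_top" by (intro tendsto_intros X1)
    then show ?thesis unfolding Ye by simp
  qed
  show ?thesis unfolding direct_connection_def
  proof (intro conjI allI tw tendsto_Pair X0 X1 Y0 Y1 Xpos)
    fix t show "0 < Y t" using Y[of t] gpos[of t] k by simp
  qed
qed

lemma conn_form:
  fixes k :: real and n :: nat
  assumes n: "n \<ge> 2" and k: "k > 0" and dc: "direct_connection n n 1 k ((k ^ 2 - 1) / k) X Y"
  shows "\<exists>C > 0. \<forall>t. X t = (1 + C * exp (- k * (real n - 1) * t)) powr (- 1 / (real n - 1))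
                         \<and> Y t = k * (X t - X t ^ n)"
proof -
  note f = dc_facts[OF dc]
  define cb where "cb = (k^2-1)/k"
  define D where "D t = Y t - k * (X t - X t ^ n)" for t
  define E where "E t = exp (t/k) * D t" for t
  have dD: "(D has_real_derivative (((k^2-1)/k - (k^2-1)/k) * Y t - D t / k)) (at t)" for t
    using D_deriv[OF f(1) k, of t] unfolding D_def .
  have dE: "(E has_real_derivative 0) (at t)" for t
  proof -
    have e: "((\<lambda>t. exp (t/k)) has_real_derivative exp (t/k) * (1/k)) (at t)"
      using k by (auto intro!: derivative_eq_intros)
    have "(E has_real_derivative exp (t/k) * (1/k) * D t + exp (t/k) * (((k^2-1)/k - (k^2-1)/k) * Y t - D t / k)) (at t)"
      unfolding E_def using DERIV_mult[OF e dD] by (simp add: algebra_simps)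
    then show ?thesis by simp
  qed
  have Dlim: "(D \<longlongrightarrow> 0) at_bot"
  proof -
    have "((\<lambda>t. Y t - k * (X t - X t ^ n)) \<longlongrightarrow> 0 - k * (0 - 0 ^ n)) at_bot"
      by (intro tendsto_intros f)
    moreover have "(0::real) ^ n = 0" using n by simp
    ultimately show ?thesis unfolding D_def by simp
  qed
  have E0: "E t = 0" for t
  proof -
    have Ec: "E s = E t" for s using DERIV_isconst_all[of E s t] dE by blast
    have "(E \<longlongrightarrow> 0) at_bot" unfolding E_def by (rule E_limbot[OF k Dlim])
    moreover have "(E \<longlongrightarrow> E t) at_bot" by (rule tendsto_eventually, rule always_eventually) (use Ec in blast)
    ultimately show ?thesis using tendsto_unique[OF trivial_limit_at_bot_linorder] by metis
  qed
  have Yeq: "Y t = k * (X t - X t ^ n)" for t using E0[of t] unfolding E_def D_def by simp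
  have Xlt: "X t < 1" for t by (rule X_lt1[OF dc])
  have dX: "(X has_real_derivative Y t) (at t)" for t using f(1) unfolding tw_solution_def by auto
  obtain j where nj: "n = Suc (Suc j)" using n by (metis add_2_eq_Suc le_Suc_ex)
  define m where "m = Suc j"
  have rm: "real n - 1 = real m" unfolding nj m_def by simp
  define P where "P t = X t ^ m" for t
  have Ppos: "P t > 0" and Plt: "P t < 1" for t
    unfolding P_def m_def using f(2)[of t] Xlt[of t] power_Suc_less_one[of "X t" j]
    by (simp_all del: power_Suc)
  have dP: "(P has_real_derivative k * real m * P t * (1 - P t)) (at t)" for t
  proof -
    have d: "(P has_real_derivative real m * X t ^ (m - Suc 0) * Y t) (at t)"
      unfolding P_def by (auto intro!: derivative_eq_intros dX)
    have eq: "real m * X t ^ (m - Suc 0) * Y t = k * real m * P t * (1 - P t)"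
      unfolding Yeq P_def m_def nj by (simp add: algebra_simps)
    show ?thesis using d unfolding eq .
  qed
  define V where "V t = (inverse (P t) - 1) * exp (k * real m * t)" for t
  have dV: "(V has_real_derivative 0) (at t)" for t
  proof -
    have di: "((\<lambda>t. inverse (P t)) has_real_derivative - (k * real m * P t * (1 - P t) * inverse (P t ^ Suc (Suc 0)))) (at t)"
      by (rule DERIV_inverse_fun[OF dP]) (use Ppos[of t] in simp)
    have d1: "((\<lambda>t. inverse (P t) - 1) has_real_derivative - (k * real m * P t * (1 - P t) * inverse (P t ^ Suc (Suc 0)))) (at t)"
      using DERIV_diff[OF di DERIV_const[of 1]] by simp
    have d2: "((\<lambda>t. exp (k * real m * t)) has_real_derivative exp (k * real m * t) * (k * real m)) (at t)"
      by (auto intro!: derivative_eq_intros)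
    have dd: "(V has_real_derivative (inverse (P t) - 1) * (exp (k * real m * t) * (k * real m))
        + (- (k * real m * P t * (1 - P t) * inverse (P t ^ Suc (Suc 0)))) * exp (k * real m * t)) (at t)"
      unfolding V_def by (rule DERIV_mult'[OF d1 d2])
    have eq: "(inverse (P t) - 1) * (exp (k * real m * t) * (k * real m))
        + (- (k * real m * P t * (1 - P t) * inverse (P t ^ Suc (Suc 0)))) * exp (k * real m * t) = 0"
      using Ppos[of t] by (simp add: field_simps power2_eq_square)
    show ?thesis using dd unfolding eq .
  qed
  define C where "C = V 0"
  have VC: "V t = C" for t unfolding C_def using DERIV_isconst_all[of V t 0] dV by blast
  have Cpos: "C > 0" unfolding C_def V_def using Ppos[of 0] Plt[of 0] by (simp add: one_less_inverse)
  show ?thesis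
  proof (intro exI[of _ C] conjI allI Cpos Yeq)
    fix t
    define B where "B = 1 + C * exp (- k * real m * t)"
    have Bpos: "B > 0" unfolding B_def using Cpos by (simp add: add_pos_nonneg)
    have "inverse (P t) - 1 = C * exp (- k * real m * t)"
    proof -
      have "(inverse (P t) - 1) * exp (k * real m * t) * exp (- k * real m * t) = C * exp (- k * real m * t)"
        using VC[of t] unfolding V_def by simp
      then show ?thesis by (simp add: mult.assoc flip: exp_add)
    qed
    then have IB: "inverse (P t) = B" unfolding B_def by simp
    have PB: "P t = 1 / B" using inverse_inverse_eq[of "P t"] IB by (simp add: divide_inverse)
    have "X t = X t powr (real m * (1 / real m))" using f(2)[of t] unfolding m_def by simp
    also have "\<dots> = (X t powr real m) powr (1 / real m)" by (simp add: powr_powr)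
    also have "\<dots> = P t powr (1 / real m)" unfolding P_def using f(2)[of t] by (simp add: powr_realpow)
    also have "\<dots> = B powr (- 1 / real m)" unfolding PB using Bpos by (simp add: powr_divide powr_minus_divide)
    finally show "X t = (1 + C * exp (- k * (real n - 1) * t)) powr (- 1 / (real n - 1))"
      unfolding rm B_def .
  qed
qed

theorem mainTheorem12:
  fixes n :: nat and k :: real
  assumes "n \<ge> 2" and "k > 0" and "k ^ 2 > 1 / (real n - 1)"
  shows "critical_velocity n n 1 k = (k ^ 2 - 1) / k \<and>
         (\<forall>X Y. direct_connection n n 1 k ((k ^ 2 - 1) / k) X Y \<longleftrightarrow>
            (\<exists>C > 0. \<forall>t. X t = (1 + C * exp (- k * (real n - 1) * t)) powr (- 1 / (real n - 1))
                         \<and> Y t = k * (X t - X t ^ n)))"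
proof (intro conjI allI iffI)
  show "critical_velocity n n 1 k = (k ^ 2 - 1) / k"
    unfolding critical_velocity_def
  proof (rule cSup_eq_maximum)
    define X where "X = (\<lambda>t. (1 + 1 * exp (- k * (real n - 1) * t)) powr (- 1 / (real n - 1)))"
    have "direct_connection n n 1 k ((k ^ 2 - 1) / k) X (\<lambda>t. k * (X t - X t ^ n))"
      by (rule sol_conn[OF assms(1,2), of 1]) (auto simp: X_def)
    then show "(k ^ 2 - 1) / k \<in> {c. connects_directly n n 1 k c}"
      unfolding connects_directly_def by blast
  next
    fix c assume "c \<in> {c. connects_directly n n 1 k c}"
    then obtain X Y where "direct_connection n n 1 k c X Y" unfolding connects_directly_def by auto
    then show "c \<le> (k ^ 2 - 1) / k" using no_conn[OF assms] by (meson not_le)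
  qed
next
  fix X Y assume "direct_connection n n 1 k ((k ^ 2 - 1) / k) X Y"
  then show "\<exists>C > 0. \<forall>t. X t = (1 + C * exp (- k * (real n - 1) * t)) powr (- 1 / (real n - 1))
                         \<and> Y t = k * (X t - X t ^ n)"
    by (rule conn_form[OF assms(1,2)])
next
  fix X Y assume "\<exists>C > 0. \<forall>t. X t = (1 + C * exp (- k * (real n - 1) * t)) powr (- 1 / (real n - 1))
                         \<and> Y t = k * (X t - X t ^ n)"
  then obtain C where "C > 0" and h: "\<And>t. X t = (1 + C * exp (- k * (real n - 1) * t)) powr (- 1 / (real n - 1))"
    "\<And>t. Y t = k * (X t - X t ^ n)" by blast
  show "direct_connection n n 1 k ((k ^ 2 - 1) / k) X Y"
    by (rule sol_conn[OF assms(1,2) \<open>C > 0\<close> h])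
qed

end
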